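(* Let $\ell>0$, $r>0$, $\lambda>0$, and let $G$ be a probability distribution on $[0,\infty)$ with finite mean. The greedy polling population process $W$ (described in the context) is $\phi$-irreducible and strongly aperiodic, where $\phi$ is the Dirac measure on $M_+(S)$ assigning unit mass to the zero counting measure. Moreover, for every integer $n\ge 0$, the level set $C_n=\{\zeta\in M_+(S):\|\zeta\|\le n\}$ is small for $W$.
   Context: $S$ is the circle of circumference $\ell$ with shortest-arc distance $d$ and uniform probability distribution $m$; $B_\rho(x)=\{y: d(x,y)<\rho\}$. $M_+(S)$ is the set of finite counting measures on $S$ with the sigma-algebra generated by $\zeta\mapsto\zeta(B)$; $\|\zeta\|=\zeta(S)$. For $x\in\zeta$ (i.e. $\zeta(\{x\})>0$), $\Gamma_\zeta(x)=\{y: d(x,y)<d(x',y)\ \forall x'\in\zeta,\ x'\ne x\}$. $W$ is the Markov chain on $M_+(S)$ with the following transition from $W_t=\zeta$: add $N$ customers at i.i.d. $m$-distributed locations, $P(N=n)=\int e^{-\lambda s}\frac{(\lambda s)^n}{n!}G(ds)$, giving $\zeta'$; then choose $U$ uniform on $S$; if $\zeta'(B_r(U))=0$ nothing changes, otherwise one customer at the atom of $\zeta'$ nearest to $U$ is removed (equivalently, for each $x\in\zeta'$ one customer at $x$ is removed with probability $m(B_r(x)\cap\Gamma_{\zeta'}(x))$). Irreducibility, strong aperiodicity and small sets are in the sense of Meyn and Tweedie: a set $C$ is small if there exist $k\ge1$ and a nonzero measure $\nu$ with $P^k(\zeta,B)\ge\nu(B)$ for all $\zeta\in C$ and measurable $B$.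 *)

theory Defs
  imports "HOL-Probability.Probability" "HOL-Library.Multiset"
begin

primrec kstep :: "'a measure \<Rightarrow> ('a \<Rightarrow> 'a measure) \<Rightarrow> nat \<Rightarrow> 'a \<Rightarrow> 'a measure" where
  "kstep M P 0 x = return M x"
| "kstep M P (Suc k) x = bind (kstep M P k x) P"

definition phi_irreducible :: "'a measure \<Rightarrow> ('a \<Rightarrow> 'a measure) \<Rightarrow> 'a measure \<Rightarrow> bool" where
  "phi_irreducible M P \<phi> \<longleftrightarrow>
     (\<forall>x\<in>space M. \<forall>B\<in>sets M. emeasure \<phi> B > 0 \<longrightarrow>
        (\<exists>n\<ge>1. emeasure (kstep M P n x) B > 0))"

definition small_set :: "'a measure \<Rightarrow> ('a \<Rightarrow> 'a measure) \<Rightarrow> 'a set \<Rightarrow> bool" where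
  "small_set M P C \<longleftrightarrow> C \<in> sets M \<and>
     (\<exists>k\<ge>1. \<exists>\<nu>. sets \<nu> = sets M \<and> emeasure \<nu> (space M) > 0 \<and>
        (\<forall>x\<in>C. \<forall>B\<in>sets M. emeasure \<nu> B \<le> emeasure (kstep M P k x) B))"

definition strongly_aperiodic :: "'a measure \<Rightarrow> ('a \<Rightarrow> 'a measure) \<Rightarrow> bool" where
  "strongly_aperiodic M P \<longleftrightarrow>
     (\<exists>C\<in>sets M. \<exists>\<nu>. sets \<nu> = sets M \<and> emeasure \<nu> C > 0 \<and>
        (\<forall>x\<in>C. \<forall>B\<in>sets M. emeasure \<nu> B \<le> emeasure (P x) B))"

text \<open>The circle of circumference L is represented by the points of [0,L) with the
  shortest-arc distance; m is the uniform probability distribution on it.\<close>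

definition circ_dist :: "real \<Rightarrow> real \<Rightarrow> real \<Rightarrow> real" where
  "circ_dist L x y = min \<bar>x - y\<bar> (L - \<bar>x - y\<bar>)"

definition circ_unif :: "real \<Rightarrow> real measure" where
  "circ_unif L = uniform_measure lborel {0..<L}"

text \<open>Finite counting measures on S are finite multisets of points of S;
  \<zeta>(B) is the number of points (with multiplicity) of \<zeta> in B.\<close>

definition cnt :: "real set \<Rightarrow> real multiset \<Rightarrow> nat" where
  "cnt B \<zeta> = size (filter_mset (\<lambda>x. x \<in> B) \<zeta>)"

definition cstates :: "real \<Rightarrow> real multiset set" where
  "cstates L = {\<zeta>. set_mset \<zeta> \<subseteq> {0..<L}}"

definition Mplus :: "real \<Rightarrow> real multiset measure" where
  "Mplus L = sigma (cstates L)
     {{\<zeta>\<in>cstates L. cnt B \<zeta> = k} | B k. B \<in> sets borel}"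

definition Gamma :: "real \<Rightarrow> real multiset \<Rightarrow> real \<Rightarrow> real set" where
  "Gamma L \<zeta> x = {y. \<forall>x'\<in>#\<zeta>. x' \<noteq> x \<longrightarrow> circ_dist L x y < circ_dist L x' y}"

text \<open>Service step with server position u: if u lies in B_r(x) \<inter> Gamma(x) for an atom x
  (necessarily unique), one customer at x is removed; otherwise nothing changes.\<close>
definition serve :: "real \<Rightarrow> real \<Rightarrow> real \<Rightarrow> real multiset \<Rightarrow> real multiset" where
  "serve L r u \<zeta> =
     (if \<exists>x\<in>#\<zeta>. circ_dist L x u < r \<and> u \<in> Gamma L \<zeta> x
      then \<zeta> - {# THE x. x \<in># \<zeta> \<and> circ_dist L x u < r \<and> u \<in> Gamma L \<zeta> x #}
      else \<zeta>)"

definition arrivals :: "real \<Rightarrow> real measure \<Rightarrow> nat measure" where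
  "arrivals lam G = density (count_space UNIV)
     (\<lambda>n. \<integral>\<^sup>+ s. ennreal (exp (- lam * s) * (lam * s) ^ n / fact n) \<partial>G)"

text \<open>One transition from \<zeta>: draw N, i.i.d. uniform locations xs 0, xs 1, ..., and the
  uniform server position U, all independent; add customers at xs 0, ..., xs (N-1), then serve.\<close>
definition polling_kernel ::
    "real \<Rightarrow> real \<Rightarrow> real \<Rightarrow> real measure \<Rightarrow> real multiset \<Rightarrow> real multiset measure" where
  "polling_kernel L r lam G \<zeta> =
     distr (arrivals lam G \<Otimes>\<^sub>M (PiM UNIV (\<lambda>_::nat. circ_unif L)) \<Otimes>\<^sub>M circ_unif L)
           (Mplus L)
           (\<lambda>(n, xs, u). serve L r u (\<zeta> + mset (map xs [0..<n])))"

end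

theory Submission imports Defs begin

lemma circ_dist_meas[measurable (raw)]:
  "f \<in> borel_measurable M \<Longrightarrow> g \<in> borel_measurable M \<Longrightarrow> (\<lambda>x. circ_dist L (f x) (g x)) \<in> borel_measurable M"
  unfolding circ_dist_def by (intro borel_measurable_min borel_measurable_abs borel_measurable_diff borel_measurable_const)

definition Cond :: "real \<Rightarrow> real \<Rightarrow> real \<Rightarrow> real multiset \<Rightarrow> real \<Rightarrow> bool" where
  "Cond L r u \<zeta> x \<longleftrightarrow> circ_dist L x u < r \<and> u \<in> Gamma L \<zeta> x"

lemma Cond_unique: "x \<in># \<zeta> \<Longrightarrow> y \<in># \<zeta> \<Longrightarrow> Cond L r u \<zeta> x \<Longrightarrow> Cond L r u \<zeta> y \<Longrightarrow> x = y"
  unfolding Cond_def Gamma_def by force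

lemma serve_alt: "serve L r u \<zeta> = (if \<exists>x\<in>#\<zeta>. Cond L r u \<zeta> x then \<zeta> - {# THE x. x \<in># \<zeta> \<and> Cond L r u \<zeta> x #} else \<zeta>)"
  unfolding serve_def Cond_def by simp

lemma serve_The:
  assumes "x \<in># \<zeta>" "Cond L r u \<zeta> x"
  shows "serve L r u \<zeta> = \<zeta> - {#x#}"
proof -
  have "(THE x. x \<in># \<zeta> \<and> Cond L r u \<zeta> x) = x"
    using assms Cond_unique by (intro the_equality) blast+
  thus ?thesis using assms by (auto simp: serve_alt)
qed

lemma serve_subset: "serve L r u \<zeta> \<subseteq># \<zeta>"
  unfolding serve_alt by auto

lemma cnt_minus1: "x \<in># \<zeta> \<Longrightarrow> cnt B (\<zeta> - {#x#}) = cnt B \<zeta> - (if x \<in> B then 1 else 0)"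
proof -
  assume "x \<in># \<zeta>"
  then obtain \<xi> where "\<zeta> = add_mset x \<xi>" by (metis insert_DiffM)
  thus ?thesis by (auto simp: cnt_def)
qed

lemma cnt_pos: "y \<in># \<zeta> \<Longrightarrow> y \<in> B \<Longrightarrow> cnt B \<zeta> \<ge> 1"
proof -
  assume "y \<in># \<zeta>" "y \<in> B"
  hence "filter_mset (\<lambda>x. x \<in> B) \<zeta> \<noteq> {#}" by (metis empty_iff set_mset_empty set_mset_filter mem_Collect_eq)
  thus ?thesis unfolding cnt_def by (cases "size {#x \<in># \<zeta>. x \<in> B#}") (auto simp: size_eq_0_iff_empty)
qed

lemma cnt_serve:
  "cnt B (serve L r u \<zeta>) = cnt B \<zeta> - (if \<exists>x\<in>#\<zeta>. Cond L r u \<zeta> x \<and> x \<in> B then 1 else 0)"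
proof (cases "\<exists>x\<in>#\<zeta>. Cond L r u \<zeta> x")
  case True
  then obtain x where x: "x \<in># \<zeta>" "Cond L r u \<zeta> x" by blast
  have "(\<exists>y\<in>#\<zeta>. Cond L r u \<zeta> y \<and> y \<in> B) \<longleftrightarrow> x \<in> B"
    using x Cond_unique by blast
  thus ?thesis using serve_The[OF x] cnt_minus1[OF x(1)] by simp
next
  case False
  thus ?thesis by (auto simp: serve_alt)
qed

lemma cnt_mset_map: "real (cnt B (mset (map v [0..<K]))) = (\<Sum>j<K. indicator B (v j))"
  by (induction K) (auto simp: cnt_def indicator_def)

lemma Gamma_mset: "u \<in> Gamma L (mset (map v [0..<K])) x \<longleftrightarrow>
   (\<forall>i<K. v i \<noteq> x \<longrightarrow> circ_dist L x u < circ_dist L (v i) u)"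
  unfolding Gamma_def by auto

lemma Psi_meas:
  assumes v: "\<And>j. (\<lambda>x. v x j) \<in> borel_measurable M" and u: "u \<in> borel_measurable M"
    and B: "B \<in> sets borel"
  shows "(\<lambda>x. real (cnt B (serve L r (u x) (mset (map (v x) [0..<K]))))) \<in> borel_measurable M"
proof -
  have eq: "real (cnt B (serve L r (u x) (mset (map (v x) [0..<K])))) =
    (\<Sum>j<K. indicator B (v x j)) - (if \<exists>j<K. circ_dist L (v x j) (u x) < r \<and>
        (\<forall>i<K. v x i \<noteq> v x j \<longrightarrow> circ_dist L (v x j) (u x) < circ_dist L (v x i) (u x)) \<and> v x j \<in> B
     then 1 else 0)" for x
  proof -
    have "(\<exists>y\<in>#mset (map (v x) [0..<K]). Cond L r (u x) (mset (map (v x) [0..<K])) y \<and> y \<in> B) \<longleftrightarrow>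
      (\<exists>j<K. circ_dist L (v x j) (u x) < r \<and>
        (\<forall>i<K. v x i \<noteq> v x j \<longrightarrow> circ_dist L (v x j) (u x) < circ_dist L (v x i) (u x)) \<and> v x j \<in> B)"
      unfolding Cond_def Gamma_mset by auto
    moreover have "(\<exists>y\<in>#mset (map (v x) [0..<K]). Cond L r (u x) (mset (map (v x) [0..<K])) y \<and> y \<in> B)
       \<Longrightarrow> cnt B (mset (map (v x) [0..<K])) \<ge> 1"
      using cnt_pos by blast
    ultimately show ?thesis
      by (auto simp: cnt_serve cnt_mset_map[symmetric] of_nat_diff)
  qed
  show ?thesis unfolding eq using v u B by measurable
qed


definition gens :: "real \<Rightarrow> real multiset set set" where
  "gens L = {{\<zeta>\<in>cstates L. cnt B \<zeta> = k} | B k. B \<in> sets borel}"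

definition Mall :: "real multiset measure" where
  "Mall = sigma UNIV {{\<zeta>. cnt B \<zeta> = k} | B k. B \<in> sets borel}"

lemma gens_Pow: "gens L \<subseteq> Pow (cstates L)"
  unfolding gens_def by auto

lemma Mplus_gens: "Mplus L = sigma (cstates L) (gens L)"
  unfolding Mplus_def gens_def ..

lemma space_Mplus[simp]: "space (Mplus L) = cstates L"
  unfolding Mplus_gens using gens_Pow by (simp add: space_measure_of_conv)

lemma sets_Mplus: "sets (Mplus L) = sigma_sets (cstates L) (gens L)"
  unfolding Mplus_gens using gens_Pow by (simp add: sets_measure_of)

lemma gen_in: "B \<in> sets borel \<Longrightarrow> {\<zeta>\<in>cstates L. cnt B \<zeta> = k} \<in> sets (Mplus L)"
  unfolding sets_Mplus gens_def by (rule sigma_sets.Basic) auto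

lemma sets_Mall: "sets Mall = sigma_sets UNIV {{\<zeta>. cnt B \<zeta> = k} | B k. B \<in> sets borel}"
  unfolding Mall_def by (simp add: sets_measure_of)

lemma Mall_gen: "B \<in> sets borel \<Longrightarrow> {\<zeta>. cnt B \<zeta> = k} \<in> sets Mall"
  unfolding sets_Mall by (rule sigma_sets.Basic) auto

lemma cstates_cnt: "cstates L = {\<zeta>. cnt (- {0..<L}) \<zeta> = 0}"
  unfolding cstates_def cnt_def by (auto simp: size_eq_0_iff_empty)

lemma cstates_Mall: "cstates L \<in> sets Mall"
  unfolding cstates_cnt by (rule Mall_gen) auto

lemma Mplus_sub_Mall: "A \<in> sets (Mplus L) \<Longrightarrow> A \<in> sets Mall"
  unfolding sets_Mplus
proof (induction rule: sigma_sets.induct)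
  case (Basic a)
  then obtain B k where "B \<in> sets borel" "a = {\<zeta>\<in>cstates L. cnt B \<zeta> = k}" unfolding gens_def by auto
  moreover have "{\<zeta>\<in>cstates L. cnt B \<zeta> = k} = cstates L \<inter> {\<zeta>. cnt B \<zeta> = k}" by auto
  ultimately show ?case using cstates_Mall Mall_gen by auto
next
  case Empty thus ?case by simp
next
  case (Compl a) thus ?case using cstates_Mall by auto
next
  case (Union a) thus ?case by auto
qed

lemma meas_Mall:
  assumes "\<And>B. B \<in> sets borel \<Longrightarrow> (\<lambda>x. real (cnt B (f x))) \<in> borel_measurable M"
  shows "f \<in> measurable M Mall"
  unfolding Mall_def
proof (rule measurable_measure_of)
  fix A assume "A \<in> {{\<zeta>. cnt B \<zeta> = k} | B k. B \<in> sets borel}"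
  then obtain B k where B: "B \<in> sets borel" and A: "A = {\<zeta>. cnt B \<zeta> = k}" by auto
  have "f -` A \<inter> space M = {x \<in> space M. real (cnt B (f x)) = real k}" using A by auto
  also have "\<dots> \<in> sets M" using assms[OF B] by measurable
  finally show "f -` A \<inter> space M \<in> sets M" .
qed auto

lemma cnt_meas: "B \<in> sets borel \<Longrightarrow> (\<lambda>\<zeta>. real (cnt B \<zeta>)) \<in> borel_measurable (Mplus L)"
proof -
  assume B: "B \<in> sets borel"
  have "(\<lambda>\<zeta>. cnt B \<zeta>) \<in> measurable (Mplus L) (count_space UNIV)"
    unfolding measurable_count_space_eq2_countable
  proof safe
    fix k
    have "(\<lambda>\<zeta>. cnt B \<zeta>) -` {k} \<inter> space (Mplus L) = {\<zeta>\<in>cstates L. cnt B \<zeta> = k}" by auto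
    thus "(\<lambda>\<zeta>. cnt B \<zeta>) -` {k} \<inter> space (Mplus L) \<in> sets (Mplus L)" using gen_in[OF B] by simp
  qed auto
  thus ?thesis by measurable
qed

lemma emeasure_distr_Mplus:
  assumes f: "f \<in> measurable M Mall" and A: "A \<in> sets (Mplus L)"
  shows "emeasure (distr M (Mplus L) f) A = emeasure M (f -` A \<inter> space M)"
proof -
  let ?\<mu> = "\<lambda>A. emeasure M (f -` A \<inter> space M)"
  have pre: "f -` X \<inter> space M \<in> sets M" if "X \<in> sets (Mplus L)" for X
    using measurable_sets[OF f Mplus_sub_Mall[OF that]] .
  have ms: "measure_space (space (Mplus L)) (sets (Mplus L)) ?\<mu>"
    unfolding measure_space_def
  proof (intro conjI)
    show "sigma_algebra (space (Mplus L)) (sets (Mplus L))" by (rule sets.sigma_algebra_axioms)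
    show "positive (sets (Mplus L)) ?\<mu>" unfolding positive_def by simp
    show "countably_additive (sets (Mplus L)) ?\<mu>"
      unfolding countably_additive_def
    proof safe
      fix X :: "nat \<Rightarrow> _" assume X: "range X \<subseteq> sets (Mplus L)" "disjoint_family X"
      have "(\<Sum>i. ?\<mu> (X i)) = emeasure M (\<Union>i. f -` X i \<inter> space M)"
        using X pre by (intro suminf_emeasure) (auto simp: disjoint_family_on_def)
      also have "(\<Union>i. f -` X i \<inter> space M) = f -` (\<Union>i. X i) \<inter> space M" by auto
      finally show "(\<Sum>i. ?\<mu> (X i)) = ?\<mu> (\<Union>i. X i)" .
    qed
  qed
  show ?thesis
    unfolding distr_def emeasure_measure_of_conv using ms A
    using sets.sigma_sets_eq[of "Mplus L"] by simp
qed


definition atom :: "real multiset \<Rightarrow> nat \<Rightarrow> real" where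
  "atom \<zeta> j = (if j < size \<zeta> then sorted_list_of_multiset \<zeta> ! j else 0)"

definition jn :: "nat \<Rightarrow> (nat \<Rightarrow> real) \<Rightarrow> (nat \<Rightarrow> real) \<Rightarrow> nat \<Rightarrow> real" where
  "jn m a xs j = (if j < m then a j else xs (j - m))"

lemma length_sl: "length (sorted_list_of_multiset \<zeta>) = size \<zeta>"
  by (metis mset_sorted_list_of_multiset size_mset)

lemma sorted_nth_le:
  fixes xs :: "real list"
  assumes s: "sorted xs" and j: "j < length xs"
  shows "xs ! j \<le> t \<longleftrightarrow> Suc j \<le> length (filter (\<lambda>x. x \<le> t) xs)"
  unfolding length_filter_conv_card
proof
  assume "xs ! j \<le> t"
  hence "{0..j} \<subseteq> {i. i < length xs \<and> xs ! i \<le> t}"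
    using sorted_nth_mono[OF s _ j] j by fastforce
  from card_mono[OF _ this] show "Suc j \<le> card {i. i < length xs \<and> xs ! i \<le> t}" by simp
next
  assume c: "Suc j \<le> card {i. i < length xs \<and> xs ! i \<le> t}"
  show "xs ! j \<le> t"
  proof (rule ccontr)
    assume "\<not> xs ! j \<le> t"
    hence "{i. i < length xs \<and> xs ! i \<le> t} \<subseteq> {..<j}"
    proof (intro subsetI)
      fix i assume "\<not> xs ! j \<le> t" "i \<in> {i. i < length xs \<and> xs ! i \<le> t}"
      hence i: "i < length xs" "xs ! i \<le> t" by auto
      show "i \<in> {..<j}"
      proof (rule ccontr)
        assume "i \<notin> {..<j}"
        hence "xs ! j \<le> xs ! i" using sorted_nth_mono[OF s, of j i] i by simp
        thus False using i \<open>\<not> xs ! j \<le> t\<close> by linarith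
      qed
    qed
    from card_mono[OF _ this] c show False by simp
  qed
qed

lemma cnt_sl: "cnt B \<zeta> = length (filter (\<lambda>x. x \<in> B) (sorted_list_of_multiset \<zeta>))"
  unfolding cnt_def by (metis mset_filter mset_sorted_list_of_multiset size_mset)

lemma cnt_UNIV: "cnt UNIV \<zeta> = size \<zeta>"
  unfolding cnt_def by simp

lemma atom_le: "atom \<zeta> j \<le> t \<longleftrightarrow>
   (real (cnt UNIV \<zeta>) \<le> real j \<and> 0 \<le> t) \<or> (real j < real (cnt UNIV \<zeta>) \<and> real (Suc j) \<le> real (cnt {..t} \<zeta>))"
proof -
  have "j < size \<zeta> \<Longrightarrow> sorted_list_of_multiset \<zeta> ! j \<le> t \<longleftrightarrow> Suc j \<le> cnt {..t} \<zeta>"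
    using sorted_nth_le[of "sorted_list_of_multiset \<zeta>" j t] by (simp add: length_sl cnt_sl)
  thus ?thesis unfolding atom_def cnt_UNIV by auto
qed

lemma cnt_meas_nat: "B \<in> sets borel \<Longrightarrow> (\<lambda>\<zeta>. cnt B \<zeta>) \<in> measurable (Mplus L) (count_space UNIV)"
  unfolding measurable_count_space_eq2_countable
proof safe
  fix k assume B: "B \<in> sets borel"
  have "(\<lambda>\<zeta>. cnt B \<zeta>) -` {k} \<inter> space (Mplus L) = {\<zeta>\<in>cstates L. cnt B \<zeta> = k}" by auto
  thus "(\<lambda>\<zeta>. cnt B \<zeta>) -` {k} \<inter> space (Mplus L) \<in> sets (Mplus L)" using gen_in[OF B] by simp
qed auto

lemma size_meas[measurable]: "size \<in> measurable (Mplus L) (count_space UNIV)"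
  using cnt_meas_nat[of UNIV L] by (simp add: cnt_UNIV[abs_def])

lemma atom_meas[measurable]: "(\<lambda>\<zeta>. atom \<zeta> j) \<in> borel_measurable (Mplus L)"
  unfolding borel_measurable_iff_le
proof
  fix t
  have m1: "(\<lambda>\<zeta>. real (cnt UNIV \<zeta>)) \<in> borel_measurable (Mplus L)" by (rule cnt_meas) simp
  have m2: "(\<lambda>\<zeta>. real (cnt {..t} \<zeta>)) \<in> borel_measurable (Mplus L)" by (rule cnt_meas) simp
  have "{w \<in> space (Mplus L). atom w j \<le> t} = {w \<in> space (Mplus L).
     (real (cnt UNIV w) \<le> real j \<and> 0 \<le> t) \<or> (real j < real (cnt UNIV w) \<and> real (Suc j) \<le> real (cnt {..t} w))}"
    unfolding atom_le ..
  also have "\<dots> \<in> sets (Mplus L)" using m1 m2 by measurable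
  finally show "{w \<in> space (Mplus L). atom w j \<le> t} \<in> sets (Mplus L)" .
qed

lemma atoms_mset: "mset (map (atom \<zeta>) [0..<size \<zeta>]) = \<zeta>"
proof -
  have "map (atom \<zeta>) [0..<size \<zeta>] = map ((!) (sorted_list_of_multiset \<zeta>)) [0..<length (sorted_list_of_multiset \<zeta>)]"
    unfolding length_sl by (intro map_cong) (auto simp: atom_def)
  thus ?thesis by (metis map_nth mset_sorted_list_of_multiset)
qed

lemma jn_split: "map (jn m a xs) [0..<m + n] = map a [0..<m] @ map xs [0..<n]"
proof -
  have 1: "map (jn m a xs) [0..<m] = map a [0..<m]" by (intro map_cong) (auto simp: jn_def)
  have 2: "map (jn m a xs) [m..<m+n] = map xs [0..<n]" by (induction n) (auto simp: jn_def)
  show ?thesis using 1 2 upt_add_eq_append[of 0 m n] by simp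
qed

lemma plus_jn: "\<zeta> + mset (map xs [0..<n]) = mset (map (jn (size \<zeta>) (atom \<zeta>) xs) [0..<size \<zeta> + n])"
  by (simp only: jn_split mset_append atoms_mset)

lemma sets_arrivals[measurable_cong]: "sets (arrivals lam G) = sets (count_space UNIV)"
  unfolding arrivals_def by simp

lemma sets_circ_unif[measurable_cong]: "sets (circ_unif L) = sets borel"
  unfolding circ_unif_def by simp

abbreviation Prod :: "real \<Rightarrow> real \<Rightarrow> real measure \<Rightarrow> (nat \<times> (nat \<Rightarrow> real) \<times> real) measure" where
  "Prod L lam G \<equiv> arrivals lam G \<Otimes>\<^sub>M (PiM UNIV (\<lambda>_::nat. circ_unif L)) \<Otimes>\<^sub>M circ_unif L"

definition Fj :: "real \<Rightarrow> real \<Rightarrow> real multiset \<Rightarrow> nat \<times> (nat \<Rightarrow> real) \<times> real \<Rightarrow> real multiset" where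
  "Fj L r \<zeta> \<omega> = (case \<omega> of (n, xs, u) \<Rightarrow> serve L r u (\<zeta> + mset (map xs [0..<n])))"

lemma kernel_Fj: "polling_kernel L r lam G \<zeta> = distr (Prod L lam G) (Mplus L) (Fj L r \<zeta>)"
  unfolding polling_kernel_def Fj_def by (simp add: case_prod_beta)

lemma joint_meas: "(\<lambda>x. Fj L r (fst x) (snd x)) \<in> measurable (Mplus L \<Otimes>\<^sub>M Prod L lam G) Mall"
proof (rule meas_Mall)
  fix B :: "real set" assume B: "B \<in> sets borel"
  define \<Phi> where "\<Phi> m n x = real (cnt B (serve L r (snd (snd (snd x)))
        (mset (map (jn m (atom (fst x)) (fst (snd (snd x)))) [0..<m + n]))))"
    for m n and x :: "real multiset \<times> nat \<times> (nat \<Rightarrow> real) \<times> real"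
  have P: "(\<lambda>x. \<Phi> m n x) \<in> borel_measurable (Mplus L \<Otimes>\<^sub>M Prod L lam G)" for m n
    unfolding \<Phi>_def
  proof (rule Psi_meas[OF _ _ B])
    fix j
    show "(\<lambda>x. jn m (atom (fst x)) (fst (snd (snd x))) j) \<in> borel_measurable (Mplus L \<Otimes>\<^sub>M Prod L lam G)"
      by (cases "j < m") (simp_all add: jn_def, measurable)
  qed measurable
  have P2: "(\<lambda>x. \<Phi> m (fst (snd x)) x) \<in> borel_measurable (Mplus L \<Otimes>\<^sub>M Prod L lam G)" for m
    by (rule measurable_compose_countable[where f="\<lambda>n x. \<Phi> m n x", OF P]) measurable
  have P3: "(\<lambda>x. \<Phi> (size (fst x)) (fst (snd x)) x) \<in> borel_measurable (Mplus L \<Otimes>\<^sub>M Prod L lam G)"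
    by (rule measurable_compose_countable[where f="\<lambda>m x. \<Phi> m (fst (snd x)) x", OF P2]) measurable
  show "(\<lambda>x. real (cnt B (Fj L r (fst x) (snd x)))) \<in> borel_measurable (Mplus L \<Otimes>\<^sub>M Prod L lam G)"
  proof (rule measurable_cong[THEN iffD1, OF _ P3])
    fix x :: "real multiset \<times> nat \<times> (nat \<Rightarrow> real) \<times> real"
    obtain \<zeta> n xs u where x: "x = (\<zeta>,n,xs,u)" by (cases x) auto
    show "\<Phi> (size (fst x)) (fst (snd x)) x = real (cnt B (Fj L r (fst x) (snd x)))"
      unfolding x \<Phi>_def Fj_def fst_conv snd_conv prod.case plus_jn by (rule refl)
  qed
qed

lemma single_meas: "\<zeta> \<in> cstates L \<Longrightarrow> Fj L r \<zeta> \<in> measurable (Prod L lam G) Mall"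
proof -
  assume z: "\<zeta> \<in> cstates L"
  have "(\<lambda>\<omega>. (\<zeta>, \<omega>)) \<in> measurable (Prod L lam G) (Mplus L \<Otimes>\<^sub>M Prod L lam G)"
    using z by (intro measurable_Pair measurable_const measurable_ident_sets) auto
  from measurable_compose[OF this joint_meas] show ?thesis by simp
qed


definition p0 :: "real \<Rightarrow> real measure \<Rightarrow> ennreal" where
  "p0 lam G = (\<integral>\<^sup>+ s. ennreal (exp (- lam * s)) \<partial>G)"

lemma arrivals_fn_meas:
  assumes "sets G = sets borel"
  shows "(\<lambda>s. ennreal (exp (- lam * s) * (lam * s) ^ n / fact n)) \<in> borel_measurable G"
proof -
  have e: "borel_measurable G = borel_measurable borel" by (rule measurable_cong_sets) (simp_all add: assms)
  show ?thesis unfolding e by measurable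
qed

lemma prob_arrivals:
  assumes lam: "lam > 0" and G: "prob_space G" "sets G = sets borel" "emeasure G {0..} = 1"
  shows "prob_space (arrivals lam G)"
proof (rule prob_spaceI)
  interpret G: prob_space G by (rule G(1))
  have AE: "AE s in G. s \<in> {0..}"
  proof -
    have "{0..} \<in> sets G" using G(2) by simp
    moreover have "G.prob {0..} = 1" using G(3) by (simp add: G.emeasure_eq_measure)
    ultimately show ?thesis using G.AE_in_set_eq_1 by blast
  qed
  have sum1: "(\<Sum>n. ennreal (exp (- lam * s) * (lam * s) ^ n / fact n)) = 1" if s: "s \<ge> 0" for s
  proof -
    have "(\<lambda>n. exp (- lam * s) * ((lam * s) ^ n / fact n)) sums (exp (- lam * s) * exp (lam * s))"
      using exp_converges[of "lam * s"] by (intro sums_mult) (simp add: divide_inverse scaleR_conv_of_real mult.commute)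
    hence "(\<lambda>n. exp (- lam * s) * (lam * s) ^ n / fact n) sums 1"
      by (simp add: exp_minus field_simps)
    hence "(\<Sum>n. ennreal (exp (- lam * s) * (lam * s) ^ n / fact n)) = ennreal 1"
      using s lam by (subst suminf_ennreal2) (auto simp: sums_iff)
    thus ?thesis by simp
  qed
  have "emeasure (arrivals lam G) (space (arrivals lam G)) =
      (\<integral>\<^sup>+ n. (\<integral>\<^sup>+ s. ennreal (exp (- lam * s) * (lam * s) ^ n / fact n) \<partial>G) \<partial>count_space UNIV)"
    unfolding arrivals_def by (simp add: emeasure_density)
  also have "\<dots> = (\<Sum>n. (\<integral>\<^sup>+ s. ennreal (exp (- lam * s) * (lam * s) ^ n / fact n) \<partial>G))"
    by (rule nn_integral_count_space_nat)
  also have "\<dots> = (\<integral>\<^sup>+ s. (\<Sum>n. ennreal (exp (- lam * s) * (lam * s) ^ n / fact n)) \<partial>G)"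
    by (rule nn_integral_suminf[symmetric]) (rule arrivals_fn_meas[OF G(2)])
  also have "\<dots> = (\<integral>\<^sup>+ s. 1 \<partial>G)"
  proof (rule nn_integral_cong_AE)
    show "AE s in G. (\<Sum>n. ennreal (exp (- lam * s) * (lam * s) ^ n / fact n)) = 1"
      using AE by (rule AE_mp) (rule AE_I2, rule impI, rule sum1, simp)
  qed
  also have "\<dots> = 1" by (simp add: G.emeasure_space_1)
  finally show "emeasure (arrivals lam G) (space (arrivals lam G)) = 1" .
qed

lemma arrivals_0:
  assumes G: "sets G = sets borel"
  shows "emeasure (arrivals lam G) {0} = p0 lam G"
proof -
  have "emeasure (arrivals lam G) {0} =
     (\<integral>\<^sup>+ n. (\<integral>\<^sup>+ s. ennreal (exp (- lam * s) * (lam * s) ^ n / fact n) \<partial>G) * indicator {0} n \<partial>count_space UNIV)"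
    unfolding arrivals_def by (simp add: emeasure_density)
  also have "\<dots> = (\<integral>\<^sup>+ s. ennreal (exp (- lam * s) * (lam * s) ^ 0 / fact 0) \<partial>G) * emeasure (count_space UNIV) {0::nat}"
    by (rule nn_integral_indicator_singleton) simp
  also have "\<dots> = p0 lam G"
    by (simp add: p0_def)
  finally show ?thesis .
qed

lemma p0_pos:
  assumes G: "prob_space G" "sets G = sets borel"
  shows "p0 lam G > 0"
proof -
  interpret G: prob_space G by (rule G(1))
  have m: "(\<lambda>s. ennreal (exp (- lam * s))) \<in> borel_measurable G"
    using arrivals_fn_meas[OF G(2), of lam 0] by simp
  have "p0 lam G \<noteq> 0"
  proof
    assume "p0 lam G = 0"
    hence "AE s in G. ennreal (exp (- lam * s)) = 0" unfolding p0_def using nn_integral_0_iff_AE[OF m] by simp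
    hence "AE s in G. False" by (rule AE_mp) simp
    thus False by simp
  qed
  thus ?thesis by (simp add: zero_less_iff_neq_zero)
qed

lemma prob_circ: "L > 0 \<Longrightarrow> prob_space (circ_unif L)"
  unfolding circ_unif_def by (rule prob_space_uniform_measure) auto

lemma prob_PiM: "L > 0 \<Longrightarrow> prob_space (PiM UNIV (\<lambda>_::nat. circ_unif L))"
proof -
  assume "L > 0"
  then interpret product_prob_space "\<lambda>_::nat. circ_unif L" UNIV
    by (intro product_prob_spaceI prob_circ)
  show ?thesis by (rule P.prob_space_axioms)
qed

lemma prob_Prod:
  assumes "L > 0" "lam > 0" "prob_space G" "sets G = sets borel" "emeasure G {0..} = 1"
  shows "prob_space (Prod L lam G)"
  using assms by (intro prob_space_pair prob_arrivals prob_PiM prob_circ)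

lemma circ_unif_Ico:
  assumes "L > 0" "0 \<le> a" "a \<le> b" "b \<le> L" "U \<in> sets borel" "U \<subseteq> {a..<b}"
    "emeasure lborel U = emeasure lborel {a..<b}"
  shows "emeasure (circ_unif L) U = ennreal ((b - a) / L)"
proof -
  have "{0..<L} \<inter> U = U" using assms by auto
  thus ?thesis using assms unfolding circ_unif_def by (simp add: divide_ennreal)
qed

lemma rect:
  assumes "L > 0" "lam > 0" "prob_space G" "sets G = sets borel" "emeasure G {0..} = 1"
    and U: "U \<in> sets borel"
  shows "emeasure (Prod L lam G) ({0} \<times> (space (PiM UNIV (\<lambda>_::nat. circ_unif L)) \<times> U)) =
      p0 lam G * emeasure (circ_unif L) U"
proof -
  interpret P2: prob_space "PiM UNIV (\<lambda>_::nat. circ_unif L) \<Otimes>\<^sub>M circ_unif L"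
    using assms by (intro prob_space_pair prob_PiM prob_circ)
  interpret C: prob_space "circ_unif L" using assms by (intro prob_circ)
  interpret P1: prob_space "PiM UNIV (\<lambda>_::nat. circ_unif L)" using assms by (intro prob_PiM)
  have "emeasure (Prod L lam G) ({0} \<times> (space (PiM UNIV (\<lambda>_::nat. circ_unif L)) \<times> U)) =
      emeasure (arrivals lam G) {0} * emeasure (PiM UNIV (\<lambda>_::nat. circ_unif L) \<Otimes>\<^sub>M circ_unif L) (space (PiM UNIV (\<lambda>_::nat. circ_unif L)) \<times> U)"
    using U by (intro P2.emeasure_pair_measure_Times) (auto simp: sets_arrivals)
  also have "emeasure (PiM UNIV (\<lambda>_::nat. circ_unif L) \<Otimes>\<^sub>M circ_unif L) (space (PiM UNIV (\<lambda>_::nat. circ_unif L)) \<times> U)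
     = emeasure (circ_unif L) U"
    using U by (subst C.emeasure_pair_measure_Times) (auto simp: P1.emeasure_space_1)
  finally show ?thesis using arrivals_0 assms by simp
qed


lemma tie:
  assumes "x \<in> {0..<L}" "x' \<in> {0..<L}" "x \<noteq> x'" "circ_dist L x u = circ_dist L x' u"
  shows "2 * u = x + x' \<or> 2 * u = x + x' + L \<or> 2 * u = x + x' - L"
  using assms unfolding circ_dist_def min_def by (auto simp: abs_if split: if_splits)

definition T :: "real \<Rightarrow> real multiset \<Rightarrow> real set" where
  "T L \<zeta> = (\<lambda>(x,x'). (x + x') / 2) ` (set_mset \<zeta> \<times> set_mset \<zeta>) \<union>
            (\<lambda>(x,x'). (x + x' + L) / 2) ` (set_mset \<zeta> \<times> set_mset \<zeta>) \<union>
            (\<lambda>(x,x'). (x + x' - L) / 2) ` (set_mset \<zeta> \<times> set_mset \<zeta>)"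

lemma finite_T: "finite (T L \<zeta>)"
  unfolding T_def by auto

lemma removal:
  assumes z: "\<zeta> \<in> cstates L" and x0: "x0 \<in># \<zeta>" and d: "circ_dist L x0 u < r" and u: "u \<notin> T L \<zeta>"
  shows "\<exists>x\<in>#\<zeta>. Cond L r u \<zeta> x"
proof -
  let ?S = "set_mset \<zeta>"
  let ?f = "\<lambda>y. circ_dist L y u"
  have fin: "finite (?f ` ?S)" and ne: "?f ` ?S \<noteq> {}" using x0 by auto
  obtain x where x: "x \<in> ?S" "?f x = Min (?f ` ?S)" using Min_in[OF fin ne] by auto
  have le: "?f x \<le> ?f y" if "y \<in> ?S" for y using Min_le[OF fin] that x(2) by auto
  have "Cond L r u \<zeta> x"
    unfolding Cond_def Gamma_def
  proof (intro conjI CollectI ballI impI)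
    show "circ_dist L x u < r" using le[of x0] x0 d by simp
    fix x' assume x': "x' \<in># \<zeta>" "x' \<noteq> x"
    have inL: "x \<in> {0..<L}" "x' \<in> {0..<L}" using z x x' unfolding cstates_def by auto
    have "circ_dist L x u \<noteq> circ_dist L x' u"
    proof
      assume "circ_dist L x u = circ_dist L x' u"
      from tie[OF inL x'(2)[symmetric] this]
      have "u = (x + x') / 2 \<or> u = (x + x' + L) / 2 \<or> u = (x + x' - L) / 2" by auto
      hence "u \<in> T L \<zeta>" unfolding T_def using x x' by force
      thus False using u by simp
    qed
    thus "circ_dist L x u < circ_dist L x' u" using le[of x'] x' by simp
  qed
  thus ?thesis using x by auto
qed

definition cc :: "real \<Rightarrow> real \<Rightarrow> real \<Rightarrow> real measure \<Rightarrow> ennreal" where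
  "cc L r lam G = p0 lam G * ennreal ((min r L / 2) / L)"

lemma cc_pos:
  assumes "L > 0" "r > 0" "prob_space G" "sets G = sets borel"
  shows "cc L r lam G > 0"
  using p0_pos[OF assms(3,4), of lam] assms(1,2)
  by (simp add: cc_def ennreal_zero_less_mult_iff)

definition Lev :: "real \<Rightarrow> nat \<Rightarrow> real multiset set" where
  "Lev L k = {\<zeta>\<in>cstates L. size \<zeta> \<le> k}"

lemma Lev_sets: "Lev L k \<in> sets (Mplus L)"
proof -
  have m: "(\<lambda>\<zeta>. real (cnt UNIV \<zeta>)) \<in> borel_measurable (Mplus L)" by (rule cnt_meas) simp
  have "Lev L k = {\<zeta> \<in> space (Mplus L). real (cnt UNIV \<zeta>) \<le> real k}"
    unfolding Lev_def cnt_UNIV by auto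
  also have "\<dots> \<in> sets (Mplus L)" using m by measurable
  finally show ?thesis .
qed

lemma one_step:
  assumes L: "L > 0" and r: "r > 0" and lam: "lam > 0" and G: "prob_space G" "sets G = sets borel" "emeasure G {0..} = 1"
    and z: "\<zeta> \<in> cstates L"
  shows "cc L r lam G \<le> emeasure (polling_kernel L r lam G \<zeta>) (Lev L (size \<zeta> - 1))"
proof -
  define \<epsilon> where "\<epsilon> = min r L / 2"
  have \<epsilon>: "\<epsilon> > 0" "2 * \<epsilon> \<le> L" "2 * \<epsilon> \<le> r" using L r by (auto simp: \<epsilon>_def)
  define x0 where "x0 = (if \<zeta> = {#} then 0 else (SOME x. x \<in># \<zeta>))"
  have x0: "\<zeta> \<noteq> {#} \<Longrightarrow> x0 \<in># \<zeta>" unfolding x0_def by (metis multiset_nonemptyE someI)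
  have x0L: "x0 \<in> {0..<L}"
    using x0 z L unfolding cstates_def by (cases "\<zeta> = {#}") (auto simp: x0_def)
  define a where "a = min x0 (L - \<epsilon>)"
  have a: "0 \<le> a" "a + \<epsilon> \<le> L" using x0L \<epsilon> by (auto simp: a_def)
  define U where "U = {a..<a+\<epsilon>} - T L \<zeta>"
  have Ub: "U \<in> sets borel" unfolding U_def using finite_imp_null_set_lborel[OF finite_T, of L \<zeta>] by (intro sets.Diff) (auto simp: null_sets_def)
  have Ul: "emeasure lborel U = emeasure lborel {a..<a+\<epsilon>}"
    unfolding U_def by (rule emeasure_Diff_null_set) (auto intro: finite_imp_null_set_lborel finite_T)
  have mU: "emeasure (circ_unif L) U = ennreal (\<epsilon> / L)"
    using circ_unif_Ico[OF L a(1) _ a(2) Ub _ Ul] \<epsilon> by (auto simp: U_def)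
  have close: "circ_dist L x0 u < r" if "u \<in> U" for u
  proof -
    have "\<bar>x0 - u\<bar> < \<epsilon>" using that x0L \<epsilon> by (auto simp: U_def a_def min_def split: if_splits)
    moreover have "circ_dist L x0 u \<le> \<bar>x0 - u\<bar>" unfolding circ_dist_def by simp
    ultimately show ?thesis using \<epsilon> by linarith
  qed
  let ?E = "{0::nat} \<times> (space (PiM UNIV (\<lambda>_::nat. circ_unif L)) \<times> U)"
  let ?A = "Lev L (size \<zeta> - 1)"
  have sub: "?E \<subseteq> Fj L r \<zeta> -` ?A \<inter> space (Prod L lam G)"
  proof safe
    fix xs u assume xs: "xs \<in> space (PiM UNIV (\<lambda>_::nat. circ_unif L))" and u: "u \<in> U"
    have F: "Fj L r \<zeta> (0, xs, u) = serve L r u \<zeta>" by (simp add: Fj_def)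
    have cs: "serve L r u \<zeta> \<in> cstates L" using serve_subset[of L r u \<zeta>] z
      unfolding cstates_def by (auto dest: mset_subset_eqD)
    have "size (serve L r u \<zeta>) \<le> size \<zeta> - 1"
    proof (cases "\<zeta> = {#}")
      case True thus ?thesis using serve_subset[of L r u \<zeta>] by simp
    next
      case False
      have "u \<notin> T L \<zeta>" using u by (simp add: U_def)
      from removal[OF z x0[OF False] close[OF u] this] obtain x where x: "x \<in># \<zeta>" "Cond L r u \<zeta> x" by blast
      thus ?thesis using serve_The[OF x] by (simp add: size_Diff_singleton)
    qed
    thus "(0, xs, u) \<in> Fj L r \<zeta> -` ?A" using F cs by (simp add: Lev_def)
    show "(0, xs, u) \<in> space (Prod L lam G)" using xs by (simp add: space_pair_measure arrivals_def circ_unif_def)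
  qed
  have "emeasure (polling_kernel L r lam G \<zeta>) ?A = emeasure (Prod L lam G) (Fj L r \<zeta> -` ?A \<inter> space (Prod L lam G))"
    unfolding kernel_Fj using single_meas[OF z] Lev_sets by (rule emeasure_distr_Mplus)
  also have "\<dots> \<ge> emeasure (Prod L lam G) ?E"
    by (rule emeasure_mono[OF sub]) (rule measurable_sets[OF single_meas[OF z] Mplus_sub_Mall[OF Lev_sets]])
  finally have "emeasure (Prod L lam G) ?E \<le> emeasure (polling_kernel L r lam G \<zeta>) ?A" .
  moreover have "emeasure (Prod L lam G) ?E = cc L r lam G"
    using rect[OF L lam G Ub] mU by (simp add: cc_def \<epsilon>_def)
  ultimately show ?thesis by simp
qed


lemma emeasure_kernel:
  assumes z: "\<zeta> \<in> cstates L" and A: "A \<in> sets (Mplus L)"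
  shows "emeasure (polling_kernel L r lam G \<zeta>) A = emeasure (Prod L lam G) (Fj L r \<zeta> -` A \<inter> space (Prod L lam G))"
  unfolding kernel_Fj using single_meas[OF z] A by (rule emeasure_distr_Mplus)

lemma sets_kernel[simp]: "sets (polling_kernel L r lam G \<zeta>) = sets (Mplus L)"
  unfolding polling_kernel_def by simp

lemma empty_cstates: "{#} \<in> cstates L"
  unfolding cstates_def by simp

lemma kernel_meas:
  assumes L: "L > 0" and lam: "lam > 0" and G: "prob_space G" "sets G = sets borel" "emeasure G {0..} = 1"
  shows "polling_kernel L r lam G \<in> measurable (Mplus L) (subprob_algebra (Mplus L))"
proof (rule measurable_subprob_algebra)
  interpret P: prob_space "Prod L lam G" using prob_Prod[OF L lam G] .
  fix \<zeta> assume z: "\<zeta> \<in> space (Mplus L)"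
  show "subprob_space (polling_kernel L r lam G \<zeta>)"
  proof
    have "emeasure (polling_kernel L r lam G \<zeta>) (space (polling_kernel L r lam G \<zeta>))
        = emeasure (Prod L lam G) (Fj L r \<zeta> -` space (Mplus L) \<inter> space (Prod L lam G))"
      using z sets_eq_imp_space_eq[OF sets_kernel] by (simp add: emeasure_kernel[OF _ sets.top[of "Mplus L"], simplified])
    also have "\<dots> \<le> 1" by (rule P.emeasure_le_1)
    finally show "emeasure (polling_kernel L r lam G \<zeta>) (space (polling_kernel L r lam G \<zeta>)) \<le> 1" .
    show "space (polling_kernel L r lam G \<zeta>) \<noteq> {}"
    proof -
      have "space (polling_kernel L r lam G \<zeta>) = space (Mplus L)"
        by (rule sets_eq_imp_space_eq[OF sets_kernel])
      thus ?thesis using empty_cstates[of L] by auto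
    qed
  qed
  show "sets (polling_kernel L r lam G \<zeta>) = sets (Mplus L)" by simp
next
  interpret P: prob_space "Prod L lam G" using prob_Prod[OF L lam G] .
  fix A assume A: "A \<in> sets (Mplus L)"
  let ?Q = "(\<lambda>x. Fj L r (fst x) (snd x)) -` A \<inter> space (Mplus L \<Otimes>\<^sub>M Prod L lam G)"
  have Q: "?Q \<in> sets (Mplus L \<Otimes>\<^sub>M Prod L lam G)"
    by (rule measurable_sets[OF joint_meas Mplus_sub_Mall[OF A]])
  have "(\<lambda>\<zeta>. emeasure (Prod L lam G) (Pair \<zeta> -` ?Q)) \<in> borel_measurable (Mplus L)"
    by (rule P.measurable_emeasure_Pair[OF Q])
  moreover have "emeasure (Prod L lam G) (Pair \<zeta> -` ?Q) = emeasure (polling_kernel L r lam G \<zeta>) A"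
    if "\<zeta> \<in> space (Mplus L)" for \<zeta>
  proof -
    have "Pair \<zeta> -` ?Q = Fj L r \<zeta> -` A \<inter> space (Prod L lam G)"
      using that by (auto simp: space_pair_measure)
    thus ?thesis using emeasure_kernel[of \<zeta> L A] that A by simp
  qed
  ultimately show "(\<lambda>\<zeta>. emeasure (polling_kernel L r lam G \<zeta>) A) \<in> borel_measurable (Mplus L)"
    by (rule measurable_cong[THEN iffD1, rotated]) simp
qed

lemma sets_kstep: "sets (kstep (Mplus L) (polling_kernel L r lam G) k \<zeta>) = sets (Mplus L)"
proof (induction k)
  case 0 thus ?case by simp
next
  case (Suc k)
  have "space (kstep (Mplus L) (polling_kernel L r lam G) k \<zeta>) \<noteq> {}"
    using sets_eq_imp_space_eq[OF Suc] empty_cstates by auto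
  thus ?case by simp
qed

lemma Lev_mono: "a \<le> b \<Longrightarrow> Lev L a \<subseteq> Lev L b"
  unfolding Lev_def by auto

lemma kstep_bound:
  assumes L: "L > 0" and r: "r > 0" and lam: "lam > 0" and G: "prob_space G" "sets G = sets borel" "emeasure G {0..} = 1"
  shows "\<zeta> \<in> cstates L \<Longrightarrow> cc L r lam G ^ k \<le> emeasure (kstep (Mplus L) (polling_kernel L r lam G) k \<zeta>) (Lev L (size \<zeta> - k))"
proof (induction k)
  case 0
  have "\<zeta> \<in> Lev L (size \<zeta>)" using 0 by (simp add: Lev_def)
  thus ?case using Lev_sets by simp
next
  case (Suc k)
  let ?K = "kstep (Mplus L) (polling_kernel L r lam G) k \<zeta>"
  let ?P = "polling_kernel L r lam G"
  let ?c = "cc L r lam G"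
  have sp: "space ?K = cstates L" using sets_eq_imp_space_eq[OF sets_kstep] by simp
  have ne: "space ?K \<noteq> {}" using sp empty_cstates by auto
  have meas: "?P \<in> measurable ?K (subprob_algebra (Mplus L))"
    using kernel_meas[OF L lam G] by (simp add: measurable_cong_sets[OF sets_kstep refl])
  have "emeasure (kstep (Mplus L) ?P (Suc k) \<zeta>) (Lev L (size \<zeta> - Suc k)) =
      (\<integral>\<^sup>+ x. emeasure (?P x) (Lev L (size \<zeta> - Suc k)) \<partial>?K)"
    using emeasure_bind[OF ne meas Lev_sets] by simp
  also have "\<dots> \<ge> (\<integral>\<^sup>+ x. ?c * indicator (Lev L (size \<zeta> - k)) x \<partial>?K)"
  proof (rule nn_integral_mono)
    fix x assume x: "x \<in> space ?K"
    show "?c * indicator (Lev L (size \<zeta> - k)) x \<le> emeasure (?P x) (Lev L (size \<zeta> - Suc k))"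
    proof (cases "x \<in> Lev L (size \<zeta> - k)")
      case True
      hence "size x - 1 \<le> size \<zeta> - Suc k" by (auto simp: Lev_def)
      hence "emeasure (?P x) (Lev L (size x - 1)) \<le> emeasure (?P x) (Lev L (size \<zeta> - Suc k))"
        by (intro emeasure_mono Lev_mono) (simp_all add: Lev_sets)
      moreover have "?c \<le> emeasure (?P x) (Lev L (size x - 1))"
        using one_step[OF L r lam G] x sp by simp
      ultimately show ?thesis using True by simp
    qed simp
  qed
  also have "(\<integral>\<^sup>+ x. ?c * indicator (Lev L (size \<zeta> - k)) x \<partial>?K) = ?c * emeasure ?K (Lev L (size \<zeta> - k))"
    by (rule nn_integral_cmult_indicator) (simp add: sets_kstep Lev_sets)
  finally have "?c * emeasure ?K (Lev L (size \<zeta> - k)) \<le> emeasure (kstep (Mplus L) ?P (Suc k) \<zeta>) (Lev L (size \<zeta> - Suc k))" .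
  moreover have "?c * ?c ^ k \<le> ?c * emeasure ?K (Lev L (size \<zeta> - k))"
    using Suc by (intro mult_left_mono) auto
  ultimately show ?case by simp
qed


lemma Lev0_sub: "{#} \<in> B \<Longrightarrow> Lev L 0 \<subseteq> B"
  unfolding Lev_def by auto

lemma Lev0_eq: "{#} \<in> Lev L 0"
  unfolding Lev_def using empty_cstates by auto

lemma pow_pos: "(c::ennreal) > 0 \<Longrightarrow> c ^ n > 0"
  by (induction n) (auto simp: ennreal_zero_less_mult_iff)

theorem lemma1:
  fixes L r lam :: real and G :: "real measure"
  assumes "L > 0" and "r > 0" and "lam > 0"
    and "prob_space G" and "sets G = sets borel" and "emeasure G {0..} = 1"
    and "integrable G (\<lambda>s. s)"
  shows "phi_irreducible (Mplus L) (polling_kernel L r lam G) (return (Mplus L) {#})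
       \<and> strongly_aperiodic (Mplus L) (polling_kernel L r lam G)
       \<and> (\<forall>n::nat. small_set (Mplus L) (polling_kernel L r lam G)
                     {\<zeta>\<in>space (Mplus L). size \<zeta> \<le> n})"
proof (intro conjI allI)
  note A = assms(1-6)
  let ?c = "cc L r lam G"
  let ?P = "polling_kernel L r lam G"
  have c: "?c > 0" using cc_pos assms by blast
  have ret: "emeasure (return (Mplus L) {#}) B = indicator B {#}" if "B \<in> sets (Mplus L)" for B
    using that by simp
  show "phi_irreducible (Mplus L) ?P (return (Mplus L) {#})"
    unfolding phi_irreducible_def
  proof (intro ballI impI)
    fix x B assume x: "x \<in> space (Mplus L)" and B: "B \<in> sets (Mplus L)"
      and pos: "0 < emeasure (return (Mplus L) {#}) B"
    have e: "{#} \<in> B" using pos ret[OF B] by (cases "{#} \<in> B") auto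
    have "0 < ?c ^ Suc (size x)" by (rule pow_pos[OF c])
    also have "?c ^ Suc (size x) \<le> emeasure (kstep (Mplus L) ?P (Suc (size x)) x) (Lev L (size x - Suc (size x)))"
      by (rule kstep_bound[OF A]) (use x in simp)
    also have "\<dots> \<le> emeasure (kstep (Mplus L) ?P (Suc (size x)) x) B"
      using Lev0_sub[OF e, of L] B by (intro emeasure_mono) (auto simp del: kstep.simps simp: sets_kstep)
    finally have "0 < emeasure (kstep (Mplus L) ?P (Suc (size x)) x) B" .
    thus "\<exists>n\<ge>1. 0 < emeasure (kstep (Mplus L) ?P n x) B" by (intro exI[of _ "Suc (size x)"]) simp
  qed
  show "strongly_aperiodic (Mplus L) ?P"
    unfolding strongly_aperiodic_def
  proof (intro bexI exI conjI ballI)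
    show "Lev L 0 \<in> sets (Mplus L)" by (rule Lev_sets)
    show "sets (scale_measure ?c (return (Mplus L) {#})) = sets (Mplus L)" by simp
    show "0 < emeasure (scale_measure ?c (return (Mplus L) {#})) (Lev L 0)"
      using c Lev0_eq[of L] Lev_sets by simp
    fix x B assume x: "x \<in> Lev L 0" and B: "B \<in> sets (Mplus L)"
    have x0: "x = {#}" using x by (simp add: Lev_def)
    show "emeasure (scale_measure ?c (return (Mplus L) {#})) B \<le> emeasure (?P x) B"
    proof (cases "{#} \<in> B")
      case True
      have "?c \<le> emeasure (?P x) (Lev L (size x - 1))" using one_step[OF A, of x] x0 empty_cstates[of L] by simp
      also have "\<dots> \<le> emeasure (?P x) B"
        using Lev0_sub[OF True, of L] B x0 by (intro emeasure_mono) auto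
      finally show ?thesis using True B by simp
    qed (use B in simp)
  qed
  fix n :: nat
  have C: "{\<zeta>\<in>space (Mplus L). size \<zeta> \<le> n} = Lev L n" by (simp add: Lev_def)
  show "small_set (Mplus L) ?P {\<zeta>\<in>space (Mplus L). size \<zeta> \<le> n}"
    unfolding small_set_def C
  proof (intro conjI exI[of _ "Suc n"] exI[of _ "scale_measure (?c ^ Suc n) (return (Mplus L) {#})"] ballI)
    show "Lev L n \<in> sets (Mplus L)" by (rule Lev_sets)
    show "1 \<le> Suc n" by simp
    show "sets (scale_measure (?c ^ Suc n) (return (Mplus L) {#})) = sets (Mplus L)" by simp
    show "0 < emeasure (scale_measure (?c ^ Suc n) (return (Mplus L) {#})) (space (Mplus L))"
      using pow_pos[OF c, of "Suc n"] empty_cstates[of L] sets.top[of "Mplus L"] by simp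
    fix x B assume x: "x \<in> Lev L n" and B: "B \<in> sets (Mplus L)"
    show "emeasure (scale_measure (?c ^ Suc n) (return (Mplus L) {#})) B \<le> emeasure (kstep (Mplus L) ?P (Suc n) x) B"
    proof (cases "{#} \<in> B")
      case True
      have xs: "x \<in> cstates L" "size x - Suc n = 0" using x by (auto simp: Lev_def)
      have "?c ^ Suc n \<le> emeasure (kstep (Mplus L) ?P (Suc n) x) (Lev L (size x - Suc n))"
        using kstep_bound[OF A xs(1)] .
      also have "\<dots> \<le> emeasure (kstep (Mplus L) ?P (Suc n) x) B"
        using Lev0_sub[OF True, of L] B xs(2) by (intro emeasure_mono) (auto simp del: kstep.simps simp: sets_kstep)
      finally show ?thesis using True B by simp
    qed (use B in simp)
  qed
qed

end
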